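(* A proper restriction semigroup $S$ is ultra proper if and only if its underlying right partial action $\circ$ is a partially defined action, that is, for all $s,t\in S/\sigma$ and $x\in P(S)$: $x\circ(st)$ is defined if and only if $x\circ s$ and $(x\circ s)\circ t$ are defined.
   Context: Restriction semigroup: algebra $(S,\cdot,{}^*,{}^+)$ with $(S,\cdot)$ a semigroup satisfying $xx^*=x$, $x^*y^*=y^*x^*$, $(xy^* )^*=x^*y^*$, $x^*y=y(xy)^*$, $x^+x=x$, $x^+y^+=y^+x^+$, $(x^+y)^+=x^+y^+$, $xy^+=(xy)^+x$, $(x^+)^*=x^+$, $(x^* )^+=x^*$. $P(S)=\{x^*\}$; $\sigma$ the least congruence identifying all projections; $S$ proper if ($a^*=b^*$, $a\sigma b$) or ($a^+=b^+$, $a\sigma b$) imply $a=b$. Underlying left partial action of $S/\sigma$ on $P(S)$: $t\cdot e$ is defined iff there is $a\in t$ with $a^*\ge e$, and then $t\cdot e=(ae)^+$. Underlying right partial action: $e\circ t$ is defined iff $e=t\cdot f$ for some $f$, and then $e\circ t=f$. A left partial action $\cdot$ is a partially defined action if for all $s,t,x$: $(st)\cdot x$ is defined iff $t\cdot x$ and $s\cdot(t\cdot x)$ are defined. $S$ is ultra proper if it is proper and its underlying left partial action is a partially defined action. *)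

theory Defs
  imports Main
begin

text \<open>A restriction semigroup is modelled on a whole type 'a, with multiplication m,
  right unary operation st (x*) and left unary operation pl (x+).\<close>

definition restriction_semigroup ::
  "('a \<Rightarrow> 'a \<Rightarrow> 'a) \<Rightarrow> ('a \<Rightarrow> 'a) \<Rightarrow> ('a \<Rightarrow> 'a) \<Rightarrow> bool" where
  "restriction_semigroup m st pl \<longleftrightarrow>
     (\<forall>x y z. m (m x y) z = m x (m y z)) \<and>
     (\<forall>x. m x (st x) = x) \<and>
     (\<forall>x y. m (st x) (st y) = m (st y) (st x)) \<and>
     (\<forall>x y. st (m x (st y)) = m (st x) (st y)) \<and>
     (\<forall>x y. m (st x) y = m y (st (m x y))) \<and>
     (\<forall>x. m (pl x) x = x) \<and>
     (\<forall>x y. m (pl x) (pl y) = m (pl y) (pl x)) \<and>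
     (\<forall>x y. pl (m (pl x) y) = m (pl x) (pl y)) \<and>
     (\<forall>x y. m x (pl y) = m (pl (m x y)) x) \<and>
     (\<forall>x. st (pl x) = pl x) \<and>
     (\<forall>x. pl (st x) = st x)"

definition projections :: "('a \<Rightarrow> 'a) \<Rightarrow> 'a set" where
  "projections st = range st"

definition proj_le :: "('a \<Rightarrow> 'a \<Rightarrow> 'a) \<Rightarrow> 'a \<Rightarrow> 'a \<Rightarrow> bool" where
  "proj_le m e f \<longleftrightarrow> e = m e f"

definition congruence :: "('a \<Rightarrow> 'a \<Rightarrow> 'a) \<Rightarrow> ('a \<times> 'a) set \<Rightarrow> bool" where
  "congruence m R \<longleftrightarrow> equiv UNIV R \<and>
     (\<forall>a b c. (a, b) \<in> R \<longrightarrow> (m c a, m c b) \<in> R \<and> (m a c, m b c) \<in> R)"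

definition sigma :: "('a \<Rightarrow> 'a \<Rightarrow> 'a) \<Rightarrow> ('a \<Rightarrow> 'a) \<Rightarrow> ('a \<times> 'a) set" where
  "sigma m st = \<Inter> {R. congruence m R \<and> projections st \<times> projections st \<subseteq> R}"

definition sigma_classes :: "('a \<Rightarrow> 'a \<Rightarrow> 'a) \<Rightarrow> ('a \<Rightarrow> 'a) \<Rightarrow> 'a set set" where
  "sigma_classes m st = UNIV // sigma m st"

definition class_mult ::
  "('a \<Rightarrow> 'a \<Rightarrow> 'a) \<Rightarrow> ('a \<Rightarrow> 'a) \<Rightarrow> 'a set \<Rightarrow> 'a set \<Rightarrow> 'a set" where
  "class_mult m st s t = {c. \<exists>a\<in>s. \<exists>b\<in>t. (c, m a b) \<in> sigma m st}"

definition proper :: "('a \<Rightarrow> 'a \<Rightarrow> 'a) \<Rightarrow> ('a \<Rightarrow> 'a) \<Rightarrow> ('a \<Rightarrow> 'a) \<Rightarrow> bool" where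
  "proper m st pl \<longleftrightarrow>
     (\<forall>a b. st a = st b \<and> (a, b) \<in> sigma m st \<longrightarrow> a = b) \<and>
     (\<forall>a b. pl a = pl b \<and> (a, b) \<in> sigma m st \<longrightarrow> a = b)"

text \<open>Underlying left partial action: t\<cdot>e is defined iff some a \<in> t has a* \<ge> e,
  and then t\<cdot>e = (ae)+ (independent of the choice of a).\<close>
definition lact ::
  "('a \<Rightarrow> 'a \<Rightarrow> 'a) \<Rightarrow> ('a \<Rightarrow> 'a) \<Rightarrow> ('a \<Rightarrow> 'a) \<Rightarrow> 'a set \<Rightarrow> 'a \<Rightarrow> 'a option" where
  "lact m st pl t e =
     (if \<exists>a\<in>t. proj_le m e (st a)
      then Some (pl (m (SOME a. a \<in> t \<and> proj_le m e (st a)) e))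
      else None)"

text \<open>Underlying right partial action: e\<circ>t is defined iff e = t\<cdot>f for some projection f,
  and then e\<circ>t = f (unique).\<close>
definition ract ::
  "('a \<Rightarrow> 'a \<Rightarrow> 'a) \<Rightarrow> ('a \<Rightarrow> 'a) \<Rightarrow> ('a \<Rightarrow> 'a) \<Rightarrow> 'a \<Rightarrow> 'a set \<Rightarrow> 'a option" where
  "ract m st pl e t =
     (if \<exists>f\<in>projections st. lact m st pl t f = Some e
      then Some (SOME f. f \<in> projections st \<and> lact m st pl t f = Some e)
      else None)"

definition left_pda :: "('a \<Rightarrow> 'a \<Rightarrow> 'a) \<Rightarrow> ('a \<Rightarrow> 'a) \<Rightarrow> ('a \<Rightarrow> 'a) \<Rightarrow> bool" where
  "left_pda m st pl \<longleftrightarrow>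
     (\<forall>s\<in>sigma_classes m st. \<forall>t\<in>sigma_classes m st. \<forall>x\<in>projections st.
        lact m st pl (class_mult m st s t) x \<noteq> None \<longleftrightarrow>
        (\<exists>y. lact m st pl t x = Some y \<and> lact m st pl s y \<noteq> None))"

definition right_pda :: "('a \<Rightarrow> 'a \<Rightarrow> 'a) \<Rightarrow> ('a \<Rightarrow> 'a) \<Rightarrow> ('a \<Rightarrow> 'a) \<Rightarrow> bool" where
  "right_pda m st pl \<longleftrightarrow>
     (\<forall>s\<in>sigma_classes m st. \<forall>t\<in>sigma_classes m st. \<forall>x\<in>projections st.
        ract m st pl x (class_mult m st s t) \<noteq> None \<longleftrightarrow>
        (\<exists>y. ract m st pl x s = Some y \<and> ract m st pl y t \<noteq> None))"

definition ultra_proper :: "('a \<Rightarrow> 'a \<Rightarrow> 'a) \<Rightarrow> ('a \<Rightarrow> 'a) \<Rightarrow> ('a \<Rightarrow> 'a) \<Rightarrow> bool" where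
  "ultra_proper m st pl \<longleftrightarrow> proper m st pl \<and> left_pda m st pl"

end

theory Submission
  imports Defs
begin

locale rs =
  fixes m :: "'a \<Rightarrow> 'a \<Rightarrow> 'a" (infixl "\<cdot>" 70) and st pl :: "'a \<Rightarrow> 'a"
  assumes rsg: "restriction_semigroup m st pl"
begin

lemma assoc: "(x \<cdot> y) \<cdot> z = x \<cdot> (y \<cdot> z)" using rsg unfolding restriction_semigroup_def by blast
lemma ax2: "x \<cdot> st x = x" using rsg unfolding restriction_semigroup_def by blast
lemma ax3: "st x \<cdot> st y = st y \<cdot> st x" using rsg unfolding restriction_semigroup_def by blast
lemma ax4: "st (x \<cdot> st y) = st x \<cdot> st y" using rsg unfolding restriction_semigroup_def by blast
lemma ax5: "st x \<cdot> y = y \<cdot> st (x \<cdot> y)" using rsg unfolding restriction_semigroup_def by blast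
lemma ax6: "pl x \<cdot> x = x" using rsg unfolding restriction_semigroup_def by blast
lemma ax7: "pl x \<cdot> pl y = pl y \<cdot> pl x" using rsg unfolding restriction_semigroup_def by blast
lemma ax8: "pl (pl x \<cdot> y) = pl x \<cdot> pl y" using rsg unfolding restriction_semigroup_def by blast
lemma ax9: "x \<cdot> pl y = pl (x \<cdot> y) \<cdot> x" using rsg unfolding restriction_semigroup_def by blast
lemma ax10: "st (pl x) = pl x" using rsg unfolding restriction_semigroup_def by blast
lemma ax11: "pl (st x) = st x" using rsg unfolding restriction_semigroup_def by blast

abbreviation P where "P \<equiv> range st"

lemma st_st: "st (st x) = st x"
proof -
  have "st (st x) = st (pl (st x))" by (simp only: ax11)
  also have "\<dots> = pl (st x)" by (rule ax10)
  also have "\<dots> = st x" by (rule ax11)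
  finally show ?thesis .
qed
lemma pl_pl: "pl (pl x) = pl x"
proof -
  have "pl (pl x) = pl (st (pl x))" by (simp only: ax10)
  also have "\<dots> = st (pl x)" by (rule ax11)
  also have "\<dots> = pl x" by (rule ax10)
  finally show ?thesis .
qed
lemma P_st: "e \<in> P \<Longrightarrow> st e = e" using st_st by auto
lemma P_pl: "e \<in> P \<Longrightarrow> pl e = e" using ax11 by auto
lemma pl_in_P: "pl x \<in> P" using ax10[of x] by (metis rangeI)
lemma st_in_P: "st x \<in> P" by simp
lemma P_idem: "e \<in> P \<Longrightarrow> e \<cdot> e = e" using ax2[of e] P_st[of e] by simp
lemma P_comm: "e \<in> P \<Longrightarrow> f \<in> P \<Longrightarrow> e \<cdot> f = f \<cdot> e" using ax3[of e f] P_st[of e] P_st[of f] by simp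
lemma P_mult: "e \<in> P \<Longrightarrow> f \<in> P \<Longrightarrow> e \<cdot> f \<in> P"
proof -
  assume "e \<in> P" "f \<in> P"
  hence "st (e \<cdot> f) = e \<cdot> f" using ax4[of e f] P_st[of e] P_st[of f] by simp
  thus ?thesis by (metis rangeI)
qed
lemma P_absorb: "e \<in> P \<Longrightarrow> e \<cdot> f = f \<cdot> e \<Longrightarrow> f \<cdot> e = f \<Longrightarrow> e \<cdot> f = f" by simp

lemma st_le: "st (x \<cdot> y) = st (x \<cdot> y) \<cdot> st y"
proof -
  have "x \<cdot> y = (x \<cdot> y) \<cdot> st y" by (simp add: assoc ax2)
  hence "st (x \<cdot> y) = st ((x \<cdot> y) \<cdot> st y)" by simp
  thus ?thesis by (simp add: ax4)
qed

lemma st_mult: "st (x \<cdot> y) = st (st x \<cdot> y)"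
proof -
  have "st (st x \<cdot> y) = st (y \<cdot> st (x \<cdot> y))" by (simp add: ax5)
  also have "\<dots> = st y \<cdot> st (x \<cdot> y)" by (simp add: ax4 st_st)
  also have "\<dots> = st (x \<cdot> y) \<cdot> st y" by (rule ax3)
  also have "\<dots> = st (x \<cdot> y)" using st_le by simp
  finally show ?thesis by simp
qed

lemma pl_le: "pl (x \<cdot> y) = pl x \<cdot> pl (x \<cdot> y)"
proof -
  have "x \<cdot> y = pl x \<cdot> (x \<cdot> y)" using ax6[of x] by (simp add: assoc[symmetric])
  hence "pl (x \<cdot> y) = pl (pl x \<cdot> (x \<cdot> y))" by simp
  thus ?thesis by (simp add: ax8)
qed

lemma pl_mult: "pl (x \<cdot> y) = pl (x \<cdot> pl y)"
proof -
  have "pl (x \<cdot> pl y) = pl (pl (x \<cdot> y) \<cdot> x)" by (simp add: ax9)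
  also have "\<dots> = pl (x \<cdot> y) \<cdot> pl x" by (simp add: ax8 pl_pl)
  also have "\<dots> = pl x \<cdot> pl (x \<cdot> y)" by (rule ax7)
  also have "\<dots> = pl (x \<cdot> y)" using pl_le by simp
  finally show ?thesis by simp
qed

lemma ax5P: "e \<in> P \<Longrightarrow> e \<cdot> a = a \<cdot> st (e \<cdot> a)" using ax5[of e a] P_st[of e] by simp
lemma ax9P: "e \<in> P \<Longrightarrow> a \<cdot> e = pl (a \<cdot> e) \<cdot> a" using ax9[of a e] P_pl[of e] by simp

lemma le_st: "proj_le m (st (u \<cdot> v)) (st v)" unfolding proj_le_def using st_le .
lemma le_pl: "proj_le m (pl (u \<cdot> v)) (pl u)" unfolding proj_le_def
  using pl_le[of u v] ax7[of u "u \<cdot> v"] by simp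

definition R where "R = {(a,b). \<exists>e\<in>P. e \<cdot> a = e \<cdot> b}"

lemma R_cong: "congruence m R"
  unfolding congruence_def
proof (intro conjI allI impI)
  show "equiv UNIV R"
  proof (rule equivI)
    show "R \<subseteq> UNIV \<times> UNIV" by simp
    show "refl R" unfolding R_def using st_in_P by (auto intro!: reflI)
    show "sym R"
    proof (rule symI)
      fix x y assume "(x,y) \<in> R"
      then obtain e where "e \<in> P" "e \<cdot> x = e \<cdot> y" unfolding R_def by blast
      hence "e \<in> P \<and> e \<cdot> y = e \<cdot> x" by simp
      thus "(y,x) \<in> R" unfolding R_def by blast
    qed
    show "trans R"
    proof (rule transI)
      fix x y z assume "(x,y) \<in> R" "(y,z) \<in> R"
      then obtain e f where e: "e \<in> P" "e \<cdot> x = e \<cdot> y" and f: "f \<in> P" "f \<cdot> y = f \<cdot> z"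
        unfolding R_def by blast
      note ef = P_comm[OF e(1) f(1)]
      have "(e \<cdot> f) \<cdot> x = (f \<cdot> e) \<cdot> x" by (simp only: ef)
      also have "\<dots> = f \<cdot> (e \<cdot> x)" by (simp only: assoc)
      also have "\<dots> = f \<cdot> (e \<cdot> y)" by (simp only: e(2))
      also have "\<dots> = (f \<cdot> e) \<cdot> y" by (simp only: assoc)
      also have "\<dots> = (e \<cdot> f) \<cdot> y" by (simp only: ef)
      also have "\<dots> = e \<cdot> (f \<cdot> y)" by (simp only: assoc)
      also have "\<dots> = e \<cdot> (f \<cdot> z)" by (simp only: f(2))
      also have "\<dots> = (e \<cdot> f) \<cdot> z" by (simp only: assoc)
      finally have "(e \<cdot> f) \<cdot> x = (e \<cdot> f) \<cdot> z" .
      moreover have "e \<cdot> f \<in> P" using e f P_mult by blast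
      ultimately show "(x,z) \<in> R" unfolding R_def by blast
    qed
  qed
next
  fix a b c assume "(a,b) \<in> R"
  then obtain e where e: "e \<in> P" "e \<cdot> a = e \<cdot> b" unfolding R_def by blast
  have h: "c \<cdot> e = pl (c \<cdot> e) \<cdot> c" using ax9P[OF e(1)] .
  have "pl (c \<cdot> e) \<cdot> (c \<cdot> a) = (pl (c \<cdot> e) \<cdot> c) \<cdot> a" by (simp only: assoc)
  also have "\<dots> = (c \<cdot> e) \<cdot> a" using h by simp
  also have "\<dots> = (c \<cdot> e) \<cdot> b" using e(2) by (simp only: assoc)
  also have "\<dots> = (pl (c \<cdot> e) \<cdot> c) \<cdot> b" using h by simp
  also have "\<dots> = pl (c \<cdot> e) \<cdot> (c \<cdot> b)" by (simp only: assoc)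
  finally have "pl (c \<cdot> e) \<cdot> (c \<cdot> a) = pl (c \<cdot> e) \<cdot> (c \<cdot> b)" .
  moreover have "pl (c \<cdot> e) \<in> P" by (rule pl_in_P)
  ultimately show "(c \<cdot> a, c \<cdot> b) \<in> R" unfolding R_def by blast
  have "e \<cdot> (a \<cdot> c) = e \<cdot> (b \<cdot> c)" using e(2) by (simp only: assoc[symmetric])
  thus "(a \<cdot> c, b \<cdot> c) \<in> R" unfolding R_def using e(1) by blast
qed

lemma PP_R: "P \<times> P \<subseteq> R"
proof clarify
  fix x y
  let ?x = "st x" and ?y = "st y"
  have "(?x \<cdot> ?y) \<cdot> ?x = ?x \<cdot> (?x \<cdot> ?y)" by (simp add: assoc ax3)
  also have "\<dots> = ?x \<cdot> ?y" using P_idem[of ?x] by (simp add: assoc[symmetric])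
  also have "\<dots> = (?x \<cdot> ?y) \<cdot> ?y" using P_idem[of ?y] by (simp add: assoc)
  finally have "(?x \<cdot> ?y) \<cdot> ?x = (?x \<cdot> ?y) \<cdot> ?y" .
  moreover have "?x \<cdot> ?y \<in> P" by (simp add: P_mult)
  ultimately show "(st x, st y) \<in> R" unfolding R_def by blast
qed

lemma R_sub: assumes "congruence m Q" "P \<times> P \<subseteq> Q" shows "R \<subseteq> Q"
proof clarify
  fix a b assume "(a,b) \<in> R"
  then obtain e where e: "e \<in> P" "e \<cdot> a = e \<cdot> b" unfolding R_def by blast
  have eq: "equiv UNIV Q" using assms(1) unfolding congruence_def by blast
  have c: "\<And>u v w. (u,v) \<in> Q \<Longrightarrow> (u \<cdot> w, v \<cdot> w) \<in> Q" using assms(1) unfolding congruence_def by blast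
  have "(e, pl a) \<in> Q" using assms(2) e(1) pl_in_P by blast
  hence 1: "(e \<cdot> a, a) \<in> Q" using c[of e "pl a" a] ax6[of a] by simp
  have "(e, pl b) \<in> Q" using assms(2) e(1) pl_in_P by blast
  hence 2: "(e \<cdot> b, b) \<in> Q" using c[of e "pl b" b] ax6[of b] by simp
  have s: "sym Q" and t: "trans Q" using eq by (auto elim: equivE)
  have "(a, e \<cdot> a) \<in> Q" using 1 s by (simp add: symD)
  moreover have "(e \<cdot> a, b) \<in> Q" using 2 e(2) by simp
  ultimately show "(a,b) \<in> Q" using t unfolding trans_def by blast
qed

lemma sigma_eq: "sigma m st = R"
proof
  show "sigma m st \<subseteq> R" unfolding sigma_def
    by (rule Inter_lower) (simp add: R_cong PP_R projections_def)
  show "R \<subseteq> sigma m st" unfolding sigma_def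
    by (rule Inter_greatest) (simp add: R_sub projections_def)
qed

abbreviation \<sigma> where "\<sigma> \<equiv> sigma m st"

lemma sig_cong: "congruence m \<sigma>" using sigma_eq R_cong by simp
lemma sig_equiv: "equiv UNIV \<sigma>" using sig_cong unfolding congruence_def by blast
lemma sig_sym: "(a,b) \<in> \<sigma> \<Longrightarrow> (b,a) \<in> \<sigma>" using sig_equiv unfolding equiv_def sym_def by blast
lemma sig_trans: "(a,b) \<in> \<sigma> \<Longrightarrow> (b,c) \<in> \<sigma> \<Longrightarrow> (a,c) \<in> \<sigma>"
  using sig_equiv unfolding equiv_def trans_def by blast
lemma sig_refl: "(a,a) \<in> \<sigma>" using sig_equiv unfolding equiv_def refl_on_def by blast
lemma sig_multL: "(a,a') \<in> \<sigma> \<Longrightarrow> (c \<cdot> a, c \<cdot> a') \<in> \<sigma>"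
  using sig_cong unfolding congruence_def by blast
lemma sig_multR: "(a,a') \<in> \<sigma> \<Longrightarrow> (a \<cdot> c, a' \<cdot> c) \<in> \<sigma>"
  using sig_cong unfolding congruence_def by blast
lemma sig_mult: "(a,a') \<in> \<sigma> \<Longrightarrow> (b,b') \<in> \<sigma> \<Longrightarrow> (a \<cdot> b, a' \<cdot> b') \<in> \<sigma>"
proof -
  assume "(a,a') \<in> \<sigma>" "(b,b') \<in> \<sigma>"
  hence "(a \<cdot> b, a' \<cdot> b) \<in> \<sigma>" "(a' \<cdot> b, a' \<cdot> b') \<in> \<sigma>" using sig_multL sig_multR by auto
  thus ?thesis by (rule sig_trans)
qed
lemma sig_PP: "e \<in> P \<Longrightarrow> f \<in> P \<Longrightarrow> (e,f) \<in> \<sigma>" using sigma_eq PP_R by blast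
lemma sig_rP: "e \<in> P \<Longrightarrow> (a \<cdot> e, a) \<in> \<sigma>"
proof -
  assume e: "e \<in> P"
  have "(a \<cdot> e, a \<cdot> st a) \<in> \<sigma>" using sig_multL[OF sig_PP[OF e st_in_P]] .
  thus ?thesis by (simp add: ax2)
qed

lemma mem_class: "x \<in> \<sigma>``{a} \<longleftrightarrow> (a,x) \<in> \<sigma>" by simp

lemma same_class: "x \<in> \<sigma>``{a} \<Longrightarrow> y \<in> \<sigma>``{a} \<Longrightarrow> (x,y) \<in> \<sigma>"
proof -
  assume "x \<in> \<sigma>``{a}" "y \<in> \<sigma>``{a}"
  hence "(x,a) \<in> \<sigma>" "(a,y) \<in> \<sigma>" using sig_sym by auto
  thus ?thesis by (rule sig_trans)
qed

lemma class_mult_eq: "class_mult m st (\<sigma>``{a}) (\<sigma>``{b}) = \<sigma>``{a \<cdot> b}"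
  unfolding class_mult_def
proof (rule set_eqI, rule iffI)
  fix c assume "c \<in> {c. \<exists>a'\<in>\<sigma>``{a}. \<exists>b'\<in>\<sigma>``{b}. (c, a' \<cdot> b') \<in> \<sigma>}"
  then obtain a' b' where h: "(a,a') \<in> \<sigma>" "(b,b') \<in> \<sigma>" "(c, a' \<cdot> b') \<in> \<sigma>" by auto
  have "(a \<cdot> b, a' \<cdot> b') \<in> \<sigma>" using h sig_mult by simp
  moreover have "(a' \<cdot> b', c) \<in> \<sigma>" using h(3) sig_sym by simp
  ultimately have "(a \<cdot> b, c) \<in> \<sigma>" by (rule sig_trans)
  thus "c \<in> \<sigma>``{a \<cdot> b}" by simp
next
  fix c assume "c \<in> \<sigma>``{a \<cdot> b}"
  hence "(c, a \<cdot> b) \<in> \<sigma>" using sig_sym by simp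
  moreover have "a \<in> \<sigma>``{a}" "b \<in> \<sigma>``{b}" using sig_refl by auto
  ultimately show "c \<in> {c. \<exists>a'\<in>\<sigma>``{a}. \<exists>b'\<in>\<sigma>``{b}. (c, a' \<cdot> b') \<in> \<sigma>}" by blast
qed

lemma classes_E: "s \<in> sigma_classes m st \<Longrightarrow> \<exists>a. s = \<sigma>``{a}"
  unfolding sigma_classes_def quotient_def by blast
lemma classes_I: "\<sigma>``{a} \<in> sigma_classes m st"
  unfolding sigma_classes_def quotient_def by blast

lemma st_proj: "e \<in> P \<Longrightarrow> proj_le m e (st a) \<Longrightarrow> st (a \<cdot> e) = e"
proof -
  assume e: "e \<in> P" and le: "proj_le m e (st a)"
  have "st (a \<cdot> e) = st a \<cdot> e" using ax4[of a e] P_st[OF e] by simp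
  also have "\<dots> = e \<cdot> st a" using P_comm[OF st_in_P e] .
  also have "\<dots> = e" using le unfolding proj_le_def by simp
  finally show ?thesis .
qed

lemma le_comm: "e \<in> P \<Longrightarrow> f \<in> P \<Longrightarrow> proj_le m e f \<Longrightarrow> f \<cdot> e = e"
  unfolding proj_le_def using P_comm by metis

lemma lact_SomeE: "lact m st pl t e = Some y \<Longrightarrow> \<exists>a\<in>t. proj_le m e (st a) \<and> y = pl (a \<cdot> e)"
proof -
  assume h: "lact m st pl t e = Some y"
  hence ex: "\<exists>a. a \<in> t \<and> proj_le m e (st a)" unfolding lact_def by (auto split: if_splits)
  hence "y = pl (m (SOME a. a \<in> t \<and> proj_le m e (st a)) e)" using h unfolding lact_def
    by (simp add: Bex_def)
  thus ?thesis using someI_ex[OF ex] by blast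
qed

lemma lact_None: "lact m st pl t e \<noteq> None \<longleftrightarrow> (\<exists>a\<in>t. proj_le m e (st a))"
  unfolding lact_def by simp

lemma ract_None: "ract m st pl x t \<noteq> None \<longleftrightarrow> (\<exists>f\<in>P. lact m st pl t f = Some x)"
  unfolding ract_def projections_def by simp

lemma L_comp:
  assumes x: "x \<in> P" and xb: "proj_le m x (st b)" and ya: "proj_le m (pl (b \<cdot> x)) (st a)"
  shows "proj_le m x (st (a \<cdot> b))"
proof -
  have 0: "st a \<cdot> pl (b \<cdot> x) = pl (b \<cdot> x)" using le_comm[OF pl_in_P st_in_P ya] .
  have "st a \<cdot> (b \<cdot> x) = st a \<cdot> (pl (b \<cdot> x) \<cdot> (b \<cdot> x))" by (simp only: ax6)
  also have "\<dots> = (st a \<cdot> pl (b \<cdot> x)) \<cdot> (b \<cdot> x)" by (simp only: assoc)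
  also have "\<dots> = b \<cdot> x" by (simp only: 0 ax6)
  finally have 1: "st a \<cdot> (b \<cdot> x) = b \<cdot> x" .
  have "st (a \<cdot> (b \<cdot> x)) = st (st a \<cdot> (b \<cdot> x))" by (rule st_mult)
  also have "\<dots> = st (b \<cdot> x)" by (simp only: 1)
  also have "\<dots> = x" using st_proj[OF x xb] .
  finally have 2: "st (a \<cdot> b \<cdot> x) = x" by (simp only: assoc)
  have "st (a \<cdot> b \<cdot> x) = st (a \<cdot> b) \<cdot> x" using ax4[of "a \<cdot> b" x] P_st[OF x] by simp
  with 2 have "st (a \<cdot> b) \<cdot> x = x" by simp
  hence "x \<cdot> st (a \<cdot> b) = x" using P_comm[OF st_in_P x] by simp
  thus ?thesis unfolding proj_le_def by simp
qed

lemma RA: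
  assumes x: "x \<in> P" and xa: "proj_le m x (pl a)"
  shows "proj_le m (st (x \<cdot> a)) (st a)" "pl (a \<cdot> st (x \<cdot> a)) = x"
proof -
  show "proj_le m (st (x \<cdot> a)) (st a)" using le_st .
  have 1: "a \<cdot> st (x \<cdot> a) = x \<cdot> a" using ax5P[OF x] by simp
  have "pl (x \<cdot> a) = pl x \<cdot> pl a" using ax8[of x a] P_pl[OF x] by simp
  also have "\<dots> = x" using xa P_pl[OF x] unfolding proj_le_def by simp
  finally show "pl (a \<cdot> st (x \<cdot> a)) = x" using 1 by simp
qed

end

locale prs = rs +
  assumes prp: "proper m st pl"
begin

lemma prop_st: "st a = st b \<Longrightarrow> (a,b) \<in> \<sigma> \<Longrightarrow> a = b" using prp unfolding proper_def by blast
lemma prop_pl: "pl a = pl b \<Longrightarrow> (a,b) \<in> \<sigma> \<Longrightarrow> a = b" using prp unfolding proper_def by blast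

lemma uniq:
  assumes "(a,b) \<in> \<sigma>" "e \<in> P" "proj_le m e (st a)" "proj_le m e (st b)"
  shows "a \<cdot> e = b \<cdot> e"
proof -
  have "st (a \<cdot> e) = e" "st (b \<cdot> e) = e" using st_proj assms by auto
  hence "st (a \<cdot> e) = st (b \<cdot> e)" by simp
  moreover have "(a \<cdot> e, b \<cdot> e) \<in> \<sigma>" using sig_multR[OF assms(1)] .
  ultimately show ?thesis by (rule prop_st)
qed

lemma lact_eq:
  assumes "e \<in> P" "a \<in> \<sigma>``{b}" "proj_le m e (st a)"
  shows "lact m st pl (\<sigma>``{b}) e = Some (pl (a \<cdot> e))"
proof -
  have ex: "\<exists>a'. a' \<in> \<sigma>``{b} \<and> proj_le m e (st a')" using assms by blast
  define a' where "a' = (SOME a'. a' \<in> \<sigma>``{b} \<and> proj_le m e (st a'))"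
  have a': "a' \<in> \<sigma>``{b}" "proj_le m e (st a')" using someI_ex[OF ex] unfolding a'_def by auto
  have "(a', a) \<in> \<sigma>" using a'(1) assms(2) by (rule same_class)
  hence "a' \<cdot> e = a \<cdot> e" using uniq a'(2) assms by blast
  moreover have "lact m st pl (\<sigma>``{b}) e = Some (pl (a' \<cdot> e))"
    unfolding lact_def a'_def using ex by (simp add: Bex_def)
  ultimately show ?thesis by simp
qed

lemma ract_uniq:
  assumes "f1 \<in> P" "f2 \<in> P" "lact m st pl (\<sigma>``{b}) f1 = Some x" "lact m st pl (\<sigma>``{b}) f2 = Some x"
  shows "f1 = f2"
proof -
  obtain a1 where a1: "a1 \<in> \<sigma>``{b}" "proj_le m f1 (st a1)" "x = pl (a1 \<cdot> f1)"
    using lact_SomeE[OF assms(3)] by blast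
  obtain a2 where a2: "a2 \<in> \<sigma>``{b}" "proj_le m f2 (st a2)" "x = pl (a2 \<cdot> f2)"
    using lact_SomeE[OF assms(4)] by blast
  have "(a1, a2) \<in> \<sigma>" using a1(1) a2(1) by (rule same_class)
  have "(a1 \<cdot> f1, a1) \<in> \<sigma>" using sig_rP[OF assms(1)] .
  moreover have "(a2, a2 \<cdot> f2) \<in> \<sigma>" using sig_rP[OF assms(2)] sig_sym by blast
  ultimately have "(a1 \<cdot> f1, a2 \<cdot> f2) \<in> \<sigma>" using \<open>(a1, a2) \<in> \<sigma>\<close> sig_trans by blast
  moreover have "pl (a1 \<cdot> f1) = pl (a2 \<cdot> f2)" using a1 a2 by simp
  ultimately have "a1 \<cdot> f1 = a2 \<cdot> f2" using prop_pl by blast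
  moreover have "st (a1 \<cdot> f1) = f1" "st (a2 \<cdot> f2) = f2" using st_proj a1 a2 assms by auto
  ultimately show ?thesis by simp
qed

lemma ract_Some_iff:
  "ract m st pl x (\<sigma>``{b}) = Some y \<longleftrightarrow> y \<in> P \<and> lact m st pl (\<sigma>``{b}) y = Some x"
proof
  assume h: "ract m st pl x (\<sigma>``{b}) = Some y"
  hence ex: "\<exists>f. f \<in> P \<and> lact m st pl (\<sigma>``{b}) f = Some x" unfolding ract_def projections_def
    by (auto split: if_splits)
  have "y = (SOME f. f \<in> P \<and> lact m st pl (\<sigma>``{b}) f = Some x)"
    using h ex unfolding ract_def projections_def by (auto split: if_splits)
  thus "y \<in> P \<and> lact m st pl (\<sigma>``{b}) y = Some x" using someI_ex[OF ex] by simp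
next
  assume h: "y \<in> P \<and> lact m st pl (\<sigma>``{b}) y = Some x"
  hence ex: "\<exists>f. f \<in> P \<and> lact m st pl (\<sigma>``{b}) f = Some x" by blast
  define f where "f = (SOME f. f \<in> P \<and> lact m st pl (\<sigma>``{b}) f = Some x)"
  have "f \<in> P \<and> lact m st pl (\<sigma>``{b}) f = Some x" using someI_ex[OF ex] f_def by simp
  hence "f = y" using ract_uniq h by blast
  thus "ract m st pl x (\<sigma>``{b}) = Some y" unfolding ract_def projections_def using ex f_def
    by (simp add: Bex_def)
qed

definition Cond where
  "Cond \<longleftrightarrow> (\<forall>a b c. (c, a \<cdot> b) \<in> \<sigma> \<longrightarrow>
     (\<exists>a' b'. (a,a') \<in> \<sigma> \<and> (b,b') \<in> \<sigma> \<and> c = a' \<cdot> b' \<and> st a' = pl b'))"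

lemma stP_le: "e \<in> P \<Longrightarrow> proj_le m e (st a) \<Longrightarrow> st (a \<cdot> e) = e" by (rule st_proj)

lemma left_Cond: assumes L: "left_pda m st pl" shows Cond
  unfolding Cond_def
proof (intro allI impI)
  fix a b c assume c: "(c, a \<cdot> b) \<in> \<sigma>"
  define x where "x = st c"
  have xP: "x \<in> P" unfolding x_def by simp
  have cin: "c \<in> \<sigma>``{a \<cdot> b}" using c sig_sym by simp
  have "proj_le m x (st c)" unfolding x_def proj_le_def by (simp add: P_idem)
  hence "lact m st pl (class_mult m st (\<sigma>``{a}) (\<sigma>``{b})) x \<noteq> None"
    unfolding class_mult_eq lact_None using cin by blast
  hence "\<exists>y. lact m st pl (\<sigma>``{b}) x = Some y \<and> lact m st pl (\<sigma>``{a}) y \<noteq> None"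
    using L classes_I xP unfolding left_pda_def projections_def by blast
  then obtain y where y1: "lact m st pl (\<sigma>``{b}) x = Some y" and y2: "lact m st pl (\<sigma>``{a}) y \<noteq> None"
    by blast
  obtain b1 where b1: "b1 \<in> \<sigma>``{b}" "proj_le m x (st b1)" "y = pl (b1 \<cdot> x)"
    using lact_SomeE[OF y1] by blast
  obtain a1 where a1: "a1 \<in> \<sigma>``{a}" "proj_le m y (st a1)" using y2 lact_None by blast
  have yP: "y \<in> P" using b1(3) pl_in_P by simp
  define a'' where "a'' = a1 \<cdot> y"
  define b'' where "b'' = b1 \<cdot> x"
  have "(a, a1) \<in> \<sigma>" using a1 by simp
  moreover have "(a1, a'') \<in> \<sigma>" unfolding a''_def using sig_rP[OF yP] sig_sym by blast
  ultimately have aa: "(a, a'') \<in> \<sigma>" by (rule sig_trans)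
  have "(b, b1) \<in> \<sigma>" using b1 by simp
  moreover have "(b1, b'') \<in> \<sigma>" unfolding b''_def using sig_rP[OF xP] sig_sym by blast
  ultimately have bb: "(b, b'') \<in> \<sigma>" by (rule sig_trans)
  have sa: "st a'' = y" unfolding a''_def using st_proj[OF yP a1(2)] .
  have pb: "pl b'' = y" unfolding b''_def using b1(3) by simp
  have sb: "st b'' = x" unfolding b''_def using st_proj[OF xP b1(2)] .
  have "st (a'' \<cdot> b'') = st (st a'' \<cdot> b'')" by (rule st_mult)
  also have "\<dots> = st (pl b'' \<cdot> b'')" using sa pb by simp
  also have "\<dots> = x" using sb ax6 by simp
  finally have "st (a'' \<cdot> b'') = st c" unfolding x_def .
  moreover have "(a'' \<cdot> b'', c) \<in> \<sigma>"
  proof -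
    have "(a \<cdot> b, a'' \<cdot> b'') \<in> \<sigma>" using sig_mult[OF aa bb] .
    thus ?thesis using c sig_sym sig_trans by blast
  qed
  ultimately have "a'' \<cdot> b'' = c" by (rule prop_st)
  thus "\<exists>a' b'. (a,a') \<in> \<sigma> \<and> (b,b') \<in> \<sigma> \<and> c = a' \<cdot> b' \<and> st a' = pl b'"
    using aa bb sa pb by metis
qed

lemma right_Cond: assumes Rt: "right_pda m st pl" shows Cond
  unfolding Cond_def
proof (intro allI impI)
  fix a b c assume c: "(c, a \<cdot> b) \<in> \<sigma>"
  define x where "x = pl c"
  have xP: "x \<in> P" unfolding x_def by (rule pl_in_P)
  have cin: "c \<in> \<sigma>``{a \<cdot> b}" using c sig_sym by simp
  have "proj_le m (st c) (st c)" unfolding proj_le_def by (simp add: P_idem)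
  hence "lact m st pl (\<sigma>``{a \<cdot> b}) (st c) = Some (pl (c \<cdot> st c))"
    using lact_eq cin by simp
  hence "lact m st pl (\<sigma>``{a \<cdot> b}) (st c) = Some x" unfolding x_def by (simp add: ax2)
  hence "ract m st pl x (class_mult m st (\<sigma>``{a}) (\<sigma>``{b})) \<noteq> None"
    unfolding class_mult_eq ract_None by blast
  hence "\<exists>y. ract m st pl x (\<sigma>``{a}) = Some y \<and> ract m st pl y (\<sigma>``{b}) \<noteq> None"
    using Rt classes_I xP unfolding right_pda_def projections_def by blast
  then obtain y where y1: "ract m st pl x (\<sigma>``{a}) = Some y" and y2: "ract m st pl y (\<sigma>``{b}) \<noteq> None"
    by blast
  have yP: "y \<in> P" and ly: "lact m st pl (\<sigma>``{a}) y = Some x" using y1 ract_Some_iff by auto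
  obtain a1 where a1: "a1 \<in> \<sigma>``{a}" "proj_le m y (st a1)" "x = pl (a1 \<cdot> y)"
    using lact_SomeE[OF ly] by blast
  obtain f where fP: "f \<in> P" and lf: "lact m st pl (\<sigma>``{b}) f = Some y" using y2 ract_None by blast
  obtain b1 where b1: "b1 \<in> \<sigma>``{b}" "proj_le m f (st b1)" "y = pl (b1 \<cdot> f)"
    using lact_SomeE[OF lf] by blast
  define a'' where "a'' = a1 \<cdot> y"
  define b'' where "b'' = b1 \<cdot> f"
  have "(a, a1) \<in> \<sigma>" using a1 by simp
  moreover have "(a1, a'') \<in> \<sigma>" unfolding a''_def using sig_rP[OF yP] sig_sym by blast
  ultimately have aa: "(a, a'') \<in> \<sigma>" by (rule sig_trans)
  have "(b, b1) \<in> \<sigma>" using b1 by simp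
  moreover have "(b1, b'') \<in> \<sigma>" unfolding b''_def using sig_rP[OF fP] sig_sym by blast
  ultimately have bb: "(b, b'') \<in> \<sigma>" by (rule sig_trans)
  have sa: "st a'' = y" unfolding a''_def using st_proj[OF yP a1(2)] .
  have pb: "pl b'' = y" unfolding b''_def using b1(3) by simp
  have "pl (a'' \<cdot> b'') = pl (a'' \<cdot> pl b'')" by (rule pl_mult)
  also have "\<dots> = pl (a1 \<cdot> (y \<cdot> y))" unfolding a''_def using pb by (simp add: assoc)
  also have "\<dots> = x" using a1(3) P_idem[OF yP] by simp
  finally have "pl (a'' \<cdot> b'') = pl c" unfolding x_def .
  moreover have "(a'' \<cdot> b'', c) \<in> \<sigma>"
  proof -
    have "(a \<cdot> b, a'' \<cdot> b'') \<in> \<sigma>" using sig_mult[OF aa bb] .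
    thus ?thesis using c sig_sym sig_trans by blast
  qed
  ultimately have "a'' \<cdot> b'' = c" by (rule prop_pl)
  thus "\<exists>a' b'. (a,a') \<in> \<sigma> \<and> (b,b') \<in> \<sigma> \<and> c = a' \<cdot> b' \<and> st a' = pl b'"
    using aa bb sa pb by metis
qed

lemma Cond_dec:
  assumes C: Cond and c: "c \<in> \<sigma>``{a \<cdot> b}"
  obtains a' b' where "a' \<in> \<sigma>``{a}" "b' \<in> \<sigma>``{b}" "c = a' \<cdot> b'" "st a' = pl b'"
proof -
  have "(c, a \<cdot> b) \<in> \<sigma>" using c sig_sym by simp
  then obtain a' b' where "(a,a') \<in> \<sigma>" "(b,b') \<in> \<sigma>" "c = a' \<cdot> b'" "st a' = pl b'"
    using C unfolding Cond_def by blast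
  thus ?thesis using that by simp
qed

lemma st_dec: "st a' = pl b' \<Longrightarrow> st (a' \<cdot> b') = st b'"
proof -
  assume h: "st a' = pl b'"
  have "st (a' \<cdot> b') = st (st a' \<cdot> b')" by (rule st_mult)
  also have "\<dots> = st b'" using h ax6 by simp
  finally show ?thesis .
qed

lemma proj_le_trans: "e \<in> P \<Longrightarrow> f \<in> P \<Longrightarrow> g \<in> P \<Longrightarrow> proj_le m e f \<Longrightarrow> proj_le m f g \<Longrightarrow> proj_le m e g"
  unfolding proj_le_def by (metis assoc)

lemma Cond_left: assumes C: Cond shows "left_pda m st pl"
  unfolding left_pda_def projections_def[symmetric]
proof (intro ballI)
  fix s t x assume s: "s \<in> sigma_classes m st" and t: "t \<in> sigma_classes m st" and xP: "x \<in> projections st"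
  then obtain a b where sa: "s = \<sigma>``{a}" and tb: "t = \<sigma>``{b}" using classes_E by blast
  have xP: "x \<in> P" using xP unfolding projections_def .
  show "lact m st pl (class_mult m st s t) x \<noteq> None \<longleftrightarrow>
        (\<exists>y. lact m st pl t x = Some y \<and> lact m st pl s y \<noteq> None)"
  proof
    assume "lact m st pl (class_mult m st s t) x \<noteq> None"
    then obtain c where cin: "c \<in> \<sigma>``{a \<cdot> b}" and xc: "proj_le m x (st c)"
      unfolding sa tb class_mult_eq lact_None by blast
    obtain a' b' where ab: "a' \<in> \<sigma>``{a}" "b' \<in> \<sigma>``{b}" "c = a' \<cdot> b'" "st a' = pl b'"
      using Cond_dec[OF C cin] by blast
    have xb: "proj_le m x (st b')" using xc ab st_dec by simp
    have l1: "lact m st pl t x = Some (pl (b' \<cdot> x))" unfolding tb using lact_eq[OF xP ab(2) xb] .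
    have "proj_le m (pl (b' \<cdot> x)) (pl b')" by (rule le_pl)
    hence "proj_le m (pl (b' \<cdot> x)) (st a')" using ab(4) by simp
    hence "lact m st pl s (pl (b' \<cdot> x)) \<noteq> None" unfolding sa lact_None using ab(1) by blast
    thus "\<exists>y. lact m st pl t x = Some y \<and> lact m st pl s y \<noteq> None" using l1 by blast
  next
    assume "\<exists>y. lact m st pl t x = Some y \<and> lact m st pl s y \<noteq> None"
    then obtain y where y1: "lact m st pl t x = Some y" and y2: "lact m st pl s y \<noteq> None" by blast
    obtain b1 where b1: "b1 \<in> t" "proj_le m x (st b1)" "y = pl (b1 \<cdot> x)"
      using lact_SomeE[OF y1] by blast
    obtain a1 where a1: "a1 \<in> s" "proj_le m y (st a1)" using y2 lact_None by blast
    have "proj_le m x (st (a1 \<cdot> b1))" using L_comp[OF xP b1(2)] a1(2) b1(3) by simp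
    moreover have "a1 \<cdot> b1 \<in> \<sigma>``{a \<cdot> b}" using a1(1) b1(1) sa tb sig_mult by simp
    ultimately show "lact m st pl (class_mult m st s t) x \<noteq> None"
      unfolding sa tb class_mult_eq lact_None by blast
  qed
qed

lemma RA_ract:
  assumes xP: "x \<in> P" and xa: "proj_le m x (pl a')" and a': "a' \<in> \<sigma>``{a}"
  shows "ract m st pl x (\<sigma>``{a}) = Some (st (x \<cdot> a'))" "proj_le m (st (x \<cdot> a')) (st a')"
proof -
  show le: "proj_le m (st (x \<cdot> a')) (st a')" using RA[OF xP xa] by simp
  have "lact m st pl (\<sigma>``{a}) (st (x \<cdot> a')) = Some (pl (a' \<cdot> st (x \<cdot> a')))"
    using lact_eq[OF st_in_P a' le] .
  hence "lact m st pl (\<sigma>``{a}) (st (x \<cdot> a')) = Some x" using RA[OF xP xa] by simp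
  thus "ract m st pl x (\<sigma>``{a}) = Some (st (x \<cdot> a'))" using ract_Some_iff by simp
qed

lemma Cond_right: assumes C: Cond shows "right_pda m st pl"
  unfolding right_pda_def projections_def[symmetric]
proof (intro ballI)
  fix s t x assume s: "s \<in> sigma_classes m st" and t: "t \<in> sigma_classes m st" and xP: "x \<in> projections st"
  then obtain a b where sa: "s = \<sigma>``{a}" and tb: "t = \<sigma>``{b}" using classes_E by blast
  have xP: "x \<in> P" using xP unfolding projections_def .
  show "ract m st pl x (class_mult m st s t) \<noteq> None \<longleftrightarrow>
        (\<exists>y. ract m st pl x s = Some y \<and> ract m st pl y t \<noteq> None)"
  proof
    assume "ract m st pl x (class_mult m st s t) \<noteq> None"
    then obtain f where fP: "f \<in> P" and lf: "lact m st pl (\<sigma>``{a \<cdot> b}) f = Some x"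
      unfolding sa tb class_mult_eq ract_None by blast
    obtain c where cin: "c \<in> \<sigma>``{a \<cdot> b}" and fc: "proj_le m f (st c)" and xc: "x = pl (c \<cdot> f)"
      using lact_SomeE[OF lf] by blast
    obtain a' b' where ab: "a' \<in> \<sigma>``{a}" "b' \<in> \<sigma>``{b}" "c = a' \<cdot> b'" "st a' = pl b'"
      using Cond_dec[OF C cin] by blast
    have "x = pl (a' \<cdot> (b' \<cdot> f))" using xc ab(3) by (simp add: assoc)
    hence xa: "proj_le m x (pl a')" using le_pl by simp
    define y where "y = st (x \<cdot> a')"
    have r1: "ract m st pl x s = Some y" and ya: "proj_le m y (st a')"
      using RA_ract[OF xP xa ab(1)] unfolding sa y_def by auto
    have yP: "y \<in> P" unfolding y_def by simp
    have yb: "proj_le m y (pl b')" using ya ab(4) by simp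
    have "ract m st pl y t = Some (st (y \<cdot> b'))" unfolding tb using RA_ract(1)[OF yP yb ab(2)] .
    thus "\<exists>y. ract m st pl x s = Some y \<and> ract m st pl y t \<noteq> None" using r1 by blast
  next
    assume "\<exists>y. ract m st pl x s = Some y \<and> ract m st pl y t \<noteq> None"
    then obtain y where y1: "ract m st pl x s = Some y" and y2: "ract m st pl y t \<noteq> None" by blast
    have yP: "y \<in> P" and ly: "lact m st pl s y = Some x" using y1 ract_Some_iff unfolding sa by auto
    obtain a1 where a1: "a1 \<in> s" "proj_le m y (st a1)" "x = pl (a1 \<cdot> y)"
      using lact_SomeE[OF ly] by blast
    obtain f where fP: "f \<in> P" and lf: "lact m st pl t f = Some y" using y2 ract_None by blast
    obtain b1 where b1: "b1 \<in> t" "proj_le m f (st b1)" "y = pl (b1 \<cdot> f)"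
      using lact_SomeE[OF lf] by blast
    have fab: "proj_le m f (st (a1 \<cdot> b1))" using L_comp[OF fP b1(2)] a1(2) b1(3) by simp
    have abin: "a1 \<cdot> b1 \<in> \<sigma>``{a \<cdot> b}" using a1(1) b1(1) sa tb sig_mult by simp
    have "lact m st pl (\<sigma>``{a \<cdot> b}) f = Some (pl (a1 \<cdot> b1 \<cdot> f))" using lact_eq[OF fP abin fab] .
    moreover have "pl (a1 \<cdot> b1 \<cdot> f) = x"
    proof -
      have "pl (a1 \<cdot> b1 \<cdot> f) = pl (a1 \<cdot> (b1 \<cdot> f))" by (simp add: assoc)
      also have "\<dots> = pl (a1 \<cdot> pl (b1 \<cdot> f))" by (rule pl_mult)
      also have "\<dots> = x" using a1(3) b1(3) by simp
      finally show ?thesis .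
    qed
    ultimately show "ract m st pl x (class_mult m st s t) \<noteq> None"
      unfolding sa tb class_mult_eq ract_None using fP by auto
  qed
qed

end

theorem lemma3p9:
  fixes m :: "'a \<Rightarrow> 'a \<Rightarrow> 'a" and st pl :: "'a \<Rightarrow> 'a"
  assumes "restriction_semigroup m st pl"
    and "proper m st pl"
  shows "ultra_proper m st pl \<longleftrightarrow> right_pda m st pl"
proof -
  interpret prs m st pl using assms by (unfold_locales)
  show ?thesis unfolding ultra_proper_def using assms(2) left_Cond right_Cond Cond_left Cond_right by blast
qed

end
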